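(* Let $A^{(n)}_k$ be Knuth's Faulhaber coefficients, defined by $$\sum_{n\ge1}\sum_{k=0}^{n-1}\frac{x^{2n}}{(2n)!}A^{(n)}_k y^{k}=\left(\frac{x\sqrt y}{2}\right)\frac{\cosh\!\left(\tfrac12 x\sqrt{y+4}\right)-\cosh\!\left(\tfrac12 x\sqrt y\right)}{\sinh\!\left(\tfrac12 x\sqrt y\right)}.$$ Then for all integers $n\ge k\ge1$, $$A^{(n+1)}_{n-k}=\frac{2(-1)^{n-k}\Gamma(2n+3)}{\Gamma(k+2)}\sum_{j=0}^{\lfloor (k-1)/2\rfloor}\frac{(-1)^{j}\Gamma(2k-2j)}{\Gamma(k-2j)\Gamma(2j+2)}\,\frac{\zeta(2n-2j)}{(2\pi)^{2n-2j}},$$ where $\zeta$ is the Riemann zeta function.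
   Context: Equivalently, with the Gessel–Viennot normalization $f(n,k)=A^{(n+1)}_{n-k}/(n+1)$, the left side equals $(n+1)f(n,k)$. *)

theory Defs
  imports "HOL-Analysis.Analysis"
begin

text \<open>Right-hand side of the generating function, for fixed y > 0, as a function of x.
  (At x = 0 the HOL value is 0, which agrees with the removable value of the expression.)\<close>
definition faulhaber_gf :: "real \<Rightarrow> real \<Rightarrow> real" where
  "faulhaber_gf y x =
     (x * sqrt y / 2) *
     ((cosh (x * sqrt (y + 4) / 2) - cosh (x * sqrt y / 2)) / sinh (x * sqrt y / 2))"

definition faulhaber_A :: "nat \<Rightarrow> nat \<Rightarrow> real" where
  "faulhaber_A = (THE c. (\<forall>n k. n \<le> k \<longrightarrow> c n k = 0) \<and>
      (\<forall>y>0. \<exists>r>0. \<forall>x. \<bar>x\<bar> < r \<longrightarrow>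
         (\<lambda>n. \<Sum>k<n. x ^ (2*n) / fact (2*n) * c n k * y ^ k) sums faulhaber_gf y x))"

text \<open>Riemann zeta function on real arguments s > 1 (only used there).\<close>
definition zeta_real :: "real \<Rightarrow> real" where
  "zeta_real s = (\<Sum>m. 1 / (real (Suc m)) powr s)"

end

theory Submission
  imports Defs "HOL-Complex_Analysis.Complex_Analysis"
begin

definition ShW :: "real fps" where "ShW = Abs_fps (\<lambda>p. 1 / fact (2*p+1))"
definition ChW :: "real fps" where "ChW = Abs_fps (\<lambda>p. 1 / fact (2*p))"
definition KK :: "nat \<Rightarrow> real fps" where
  "KK i = Abs_fps (\<lambda>M. fact (M+i) / (fact M * fact (2*M+2*i)))"
definition FF :: "nat \<Rightarrow> real fps" where
  "FF k = Abs_fps (\<lambda>N. if k \<le> N then fact (N+1) / (fact (N-k) * fact (2*N+2)) else 0)"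

lemma FF_KK: "FF k = fps_X^k * KK (k+1)"
  by (rule fps_ext) (auto simp: FF_def KK_def fps_X_power_mult_nth algebra_simps)

lemma FF0: "FF 0 = fps_const (1/2) * ShW"
proof (rule fps_ext)
  fix N
  show "fps_nth (FF 0) N = fps_nth (fps_const (1/2) * ShW) N"
    unfolding FF_def ShW_def 
    by (simp add: divide_simps; (simp add: algebra_simps)?)
qed

lemma FF1: "FF 1 = fps_const (1/4) * ChW - fps_const (1/4) * ShW"
proof (rule fps_ext)
  fix N
  show "fps_nth (FF 1) N = fps_nth (fps_const (1/4) * ChW - fps_const (1/4) * ShW) N"
  proof (cases N)
    case 0 then show ?thesis by (simp add: FF_def ShW_def ChW_def)
  next
    case (Suc m)
    show ?thesis using Suc
      unfolding FF_def ShW_def ChW_def by (simp add: divide_simps; (simp add: algebra_simps)?)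
  qed
qed

lemma FF_rec: "FF (k+2) = fps_const (-(2*real k+3)/2) * FF (k+1) + fps_const (1/4) * (fps_X * FF k)"
proof (rule fps_ext)
  fix N
  show "fps_nth (FF (k+2)) N = fps_nth (fps_const (-(2*real k+3)/2) * FF (k+1) + fps_const (1/4) * (fps_X * FF k)) N"
  proof (cases "N \<le> k")
    case True then show ?thesis by (auto simp: FF_def)
  next
    case False
    then obtain p where N: "N = k + 1 + p" by (metis add.commute add_Suc less_imp_Suc_add not_le plus_1_eq_Suc)
    show ?thesis
    proof (cases p)
      case 0
      then show ?thesis using N unfolding FF_def
        by (simp add: divide_simps; (simp add: algebra_simps)?)
    next
      case (Suc q)
      then show ?thesis using N unfolding FF_def
        by (simp add: divide_simps; (simp add: algebra_simps)?)
    qed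
  qed
qed

definition acoef :: "nat \<Rightarrow> nat \<Rightarrow> real" where
  "acoef j q = (-1)^q * fact (2*j+2*q+1) / (4^(j+q+1) * fact q * fact (2*j+1))"

definition AA :: "nat \<Rightarrow> real fps" where
  "AA k = Abs_fps (\<lambda>j. if 2*j < k then acoef j (k-2*j-1) else 0)"

lemma I1: "acoef (Suc j) 0 = 1/4 * acoef j 0"
  unfolding acoef_def by (simp add: divide_simps; (simp add: algebra_simps)?)

lemma I2: "acoef 0 (Suc q) = -(2*real q+3)/2 * acoef 0 q"
  unfolding acoef_def by (simp add: divide_simps; (simp add: algebra_simps)?)

lemma I3: "acoef (Suc j) (Suc q) = -(2*real (2*(j+1)+q)+3)/2 * acoef (Suc j) q + 1/4 * acoef j (Suc q)"
  unfolding acoef_def by (simp add: divide_simps; (simp add: algebra_simps)?)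

lemma AA0: "AA 0 = 0"
  by (rule fps_ext) (simp add: AA_def)

lemma AA1: "AA 1 = fps_const (1/4)"
  by (rule fps_ext) (simp add: AA_def acoef_def)

lemma AA_rec: "AA (k+2) = fps_const (-(2*real k+3)/2) * AA (k+1) + fps_const (1/4) * (fps_X * AA k)"
proof (rule fps_ext)
  fix j
  show "fps_nth (AA (k+2)) j = fps_nth (fps_const (-(2*real k+3)/2) * AA (k+1) + fps_const (1/4) * (fps_X * AA k)) j"
  proof (cases "k + 2 \<le> 2*j")
    case True then show ?thesis by (auto simp: AA_def)
  next
    case False
    show ?thesis
    proof (cases "2*j = k+1")
      case True
      then obtain i where j: "j = Suc i" by (cases j) auto
      have "k - 2*i = 1" using True j by simp
      then show ?thesis using True j I1[of i] by (simp add: AA_def)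
    next
      case F2: False
      define q where "q = k - 2*j"
      have q: "k = 2*j + q" using False F2 unfolding q_def by linarith
      show ?thesis
      proof (cases j)
        case 0 then show ?thesis using q I2[of q] by (simp add: AA_def)
      next
        case (Suc i)
        have a1: "fps_nth (AA (k+2)) j = acoef (Suc i) (Suc q)" using q Suc by (simp add: AA_def)
        have a2: "fps_nth (AA (k+1)) j = acoef (Suc i) q" using q Suc by (simp add: AA_def)
        have a3: "fps_nth (fps_X * AA k) j = acoef i (Suc q)" using q Suc by (simp add: AA_def)
        have kk: "real k = real (2*(i+1)+q)" using q Suc by simp
        show ?thesis by (simp only: fps_add_nth fps_mult_left_const_nth a1 a2 a3 I3 kk)
      qed
    qed
  qed
qed

fun RR :: "nat \<Rightarrow> real fps" where
  "RR 0 = fps_const (1/2)"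
| "RR (Suc 0) = fps_const (-1/4)"
| "RR (Suc (Suc k)) = fps_const (-(2*real k+3)/2) * RR (Suc k) + fps_const (1/4) * (fps_X * RR k)"

lemma decomp: "FF k = AA k * ChW + RR k * ShW"
proof (induction k rule: RR.induct)
  case 1 then show ?case by (simp add: FF0 AA0)
next
  case 2
  have e: "fps_const (-1/4::real) = - fps_const (1/4)" by simp
  have f1: "FF (Suc 0) = fps_const (1/4) * ChW - fps_const (1/4) * ShW" using FF1 by simp
  have a1: "AA (Suc 0) = fps_const (1/4)" using AA1 by simp
  show ?case by (rule fps_ext) (simp add: f1 a1)
next
  case (3 k)
  have f: "FF (Suc (Suc k)) = fps_const (-(2*real k+3)/2) * FF (Suc k) + fps_const (1/4) * (fps_X * FF k)"
    using FF_rec[of k] by simp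
  have a: "AA (Suc (Suc k)) = fps_const (-(2*real k+3)/2) * AA (Suc k) + fps_const (1/4) * (fps_X * AA k)"
    using AA_rec[of k] by simp
  show ?case unfolding f a RR.simps using 3 by (simp add: algebra_simps)
qed

lemma RR_deg: "k - 1 < j \<Longrightarrow> fps_nth (RR k) j = 0"
proof (induction k arbitrary: j rule: RR.induct)
  case 1 then show ?case by simp
next
  case 2 then show ?case by simp
next
  case (3 k)
  have "fps_nth (RR (Suc k)) j = 0" using 3 by simp
  moreover have "fps_nth (RR k) (j - 1) = 0" using 3 by simp
  ultimately show ?case using 3 by simp
qed

definition GG :: "nat \<Rightarrow> real fps" where "GG i = KK i / ShW"
definition TT :: "real fps" where "TT = ChW / ShW"

lemma ShW0: "fps_nth ShW 0 = 1" by (simp add: ShW_def)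
lemma ShW_nz: "ShW \<noteq> 0" using ShW0 by auto

lemma GG_mult: "GG i * ShW = KK i"
  unfolding GG_def using ShW0 by (simp add: fps_divide_unit mult.assoc inverse_mult_eq_1)

lemma TT_mult: "TT * ShW = ChW"
  unfolding TT_def using ShW0 by (simp add: fps_divide_unit mult.assoc inverse_mult_eq_1)

lemma main_fps: "fps_X^k * GG (k+1) = AA k * TT + RR k"
proof -
  have "(fps_X^k * GG (k+1)) * ShW = FF k" by (simp add: FF_KK mult.assoc GG_mult)
  also have "\<dots> = AA k * (TT * ShW) + RR k * ShW" by (simp add: decomp TT_mult)
  also have "\<dots> = (AA k * TT + RR k) * ShW" by (simp add: algebra_simps)
  finally show ?thesis using ShW_nz by simp
qed

lemma GG_coeff:
  assumes "1 \<le> k" "k \<le> n"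
  shows "fps_nth (GG (k+1)) (n-k) = (\<Sum>j=0..(k-1) div 2. acoef j (k-2*j-1) * fps_nth TT (n-j))"
proof -
  have "fps_nth (GG (k+1)) (n-k) = fps_nth (fps_X^k * GG (k+1)) n"
    using assms by (simp add: fps_X_power_mult_nth)
  also have "\<dots> = fps_nth (AA k * TT) n + fps_nth (RR k) n" by (simp only: main_fps fps_add_nth)
  also have "fps_nth (RR k) n = 0" using assms by (intro RR_deg) simp
  also have "fps_nth (AA k * TT) n = (\<Sum>j=0..n. fps_nth (AA k) j * fps_nth TT (n-j))"
    by (simp add: fps_mult_nth)
  also have "\<dots> = (\<Sum>j=0..(k-1) div 2. fps_nth (AA k) j * fps_nth TT (n-j))"
    using assms by (intro sum.mono_neutral_right) (auto simp: AA_def)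
  also have "\<dots> = (\<Sum>j=0..(k-1) div 2. acoef j (k-2*j-1) * fps_nth TT (n-j))"
    using assms by (intro sum.cong refl) (auto simp: AA_def)
  finally show ?thesis by simp
qed

definition ev :: "'a::comm_semiring_1 fps \<Rightarrow> 'a fps" where
  "ev F = Abs_fps (\<lambda>m. if even m then fps_nth F (m div 2) else 0)"

lemma ev_nth_even [simp]: "fps_nth (ev F) (2*n) = fps_nth F n"
  by (simp add: ev_def)

lemma ev_nth_even' [simp]: "fps_nth (ev F) (n*2) = fps_nth F n"
  by (simp add: ev_def)

lemma ev_nth_odd: "odd m \<Longrightarrow> fps_nth (ev F) m = 0"
  by (simp add: ev_def)

lemma ev_mult: "ev (F * G) = ev F * ev G"
proof (rule fps_ext)
  fix m
  show "fps_nth (ev (F * G)) m = fps_nth (ev F * ev G) m"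
  proof (cases "even m")
    case False
    have "fps_nth (ev F * ev G) m = (\<Sum>i=0..m. fps_nth (ev F) i * fps_nth (ev G) (m - i))"
      by (simp add: fps_mult_nth)
    also have "\<dots> = 0"
    proof (intro sum.neutral ballI)
      fix i assume "i \<in> {0..m}"
      then have "odd i \<or> odd (m - i)" using False by (auto simp: even_diff_nat)
      then show "fps_nth (ev F) i * fps_nth (ev G) (m - i) = 0" by (metis ev_nth_odd mult_zero_left mult_zero_right)
    qed
    finally show ?thesis using False by (simp add: ev_def)
  next
    case True
    then obtain n where m: "m = 2*n" by auto
    have "fps_nth (ev F * ev G) m = (\<Sum>i=0..2*n. fps_nth (ev F) i * fps_nth (ev G) (2*n - i))"
      by (simp add: fps_mult_nth m)
    also have "\<dots> = (\<Sum>i\<in>(\<lambda>j. 2*j) ` {0..n}. fps_nth (ev F) i * fps_nth (ev G) (2*n - i))"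
    proof (intro sum.mono_neutral_right)
      show "\<forall>i\<in>{0..2*n} - (\<lambda>j. 2*j) ` {0..n}. fps_nth (ev F) i * fps_nth (ev G) (2*n - i) = 0"
      proof
        fix i assume i: "i \<in> {0..2*n} - (\<lambda>j. 2*j) ` {0..n}"
        have "odd i"
        proof
          assume "even i"
          then have "i = 2 * (i div 2)" by simp
          moreover have "i div 2 \<in> {0..n}" using i by auto
          ultimately show False using i by blast
        qed
        then show "fps_nth (ev F) i * fps_nth (ev G) (2*n - i) = 0" by (simp add: ev_nth_odd)
      qed
    qed auto
    also have "\<dots> = (\<Sum>j=0..n. fps_nth (ev F) (2*j) * fps_nth (ev G) (2*n - 2*j))"
      by (subst sum.reindex) (auto simp: inj_on_def)
    also have "\<dots> = (\<Sum>j=0..n. fps_nth F j * fps_nth G (n - j))"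
      by (intro sum.cong refl) (simp flip: diff_mult_distrib2)
    also have "\<dots> = fps_nth (ev (F * G)) m" by (simp add: m fps_mult_nth)
    finally show ?thesis ..
  qed
qed

definition cc :: "nat \<Rightarrow> nat \<Rightarrow> real" where
  "cc N K = (if K < N then fact (2*N) * fps_nth (GG (N-K)) K / (fact (N-K) * 4^K) else 0)"

definition DD :: "nat \<Rightarrow> real \<Rightarrow> real" where
  "DD N y = (\<Sum>K<N. fps_nth (GG (N-K)) K * (y/4)^K / fact (N-K))"

lemma D_eq: "(\<Sum>k<n. x^(2*n) / fact (2*n) * cc n k * y^k) = DD n y * x^(2*n)"
  unfolding DD_def sum_distrib_right
  by (intro sum.cong refl) (simp add: cc_def power_divide field_simps)

lemma reindex_tri:
  fixes h :: "nat \<Rightarrow> nat \<Rightarrow> real"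
  shows "(\<Sum>a\<le>N. \<Sum>K<a. h a K) = (\<Sum>i\<in>{1..N}. \<Sum>K\<le>N-i. h (K+i) K)"
proof -
  have "(\<Sum>a\<le>N. \<Sum>K<a. h a K) = (\<Sum>(a,K)\<in>Sigma {..N} (\<lambda>a. {..<a}). h a K)"
    by (rule sum.Sigma) auto
  also have "\<dots> = (\<Sum>(i,K)\<in>Sigma {1..N} (\<lambda>i. {..N-i}). h (K+i) K)"
    by (rule sum.reindex_bij_witness[where i = "\<lambda>(i,K). (K+i,K)" and j = "\<lambda>(a,K). (a-K,K)"]) auto
  also have "\<dots> = (\<Sum>i\<in>{1..N}. \<Sum>K\<le>N-i. h (K+i) K)"
    by (rule sum.Sigma[symmetric]) auto
  finally show ?thesis .
qed

lemma E1:
  "(\<Sum>a=0..N. DD a y * ((y/4)^(N-a) / fact (2*(N-a)+1))) = ((y/4+1)^N - (y/4)^N) / fact (2*N)"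
proof -
  define Y where "Y = y/4"
  have "(\<Sum>a=0..N. DD a y * ((y/4)^(N-a) / fact (2*(N-a)+1)))
      = (\<Sum>a\<le>N. \<Sum>K<a. fps_nth (GG (a-K)) K * Y^K / fact (a-K) * (Y^(N-a) / fact (2*(N-a)+1)))"
    by (simp only: DD_def Y_def sum_distrib_right atLeast0AtMost)
  also have "\<dots> = (\<Sum>i\<in>{1..N}. \<Sum>K\<le>N-i. fps_nth (GG i) K * Y^K / fact i * (Y^(N-(K+i)) / fact (2*(N-(K+i))+1)))"
    using reindex_tri[of "\<lambda>a K. fps_nth (GG (a-K)) K * Y^K / fact (a-K) * (Y^(N-a) / fact (2*(N-a)+1))" N]
    by simp
  also have "\<dots> = (\<Sum>i\<in>{1..N}. Y^(N-i) / fact i * (\<Sum>K=0..N-i. fps_nth (GG i) K * (1 / fact (2*(N-i-K)+1))))"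
    unfolding sum_distrib_left
  proof (intro sum.cong refl)
    fix i K assume "i \<in> {1..N}" "K \<in> {0..N-i}"
    then have e: "K + (N - (K+i)) = N - i" by auto
    then have "Y^K * Y^(N-(K+i)) = Y^(N-i)" by (simp flip: power_add)
    then show "fps_nth (GG i) K * Y^K / fact i * (Y^(N-(K+i)) / fact (2*(N-(K+i))+1)) =
               Y^(N-i) / fact i * (fps_nth (GG i) K * (1 / fact (2*(N-i-K)+1)))"
      by (simp add: field_simps)
  qed (simp add: atLeast0AtMost)
  also have "\<dots> = (\<Sum>i\<in>{1..N}. Y^(N-i) / fact i * fps_nth (KK i) (N-i))"
  proof (intro sum.cong refl)
    fix i
    have "fps_nth (KK i) (N-i) = fps_nth (GG i * ShW) (N-i)" by (simp add: GG_mult)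
    also have "\<dots> = (\<Sum>K=0..N-i. fps_nth (GG i) K * (1 / fact (2*(N-i-K)+1)))"
      by (simp add: fps_mult_nth ShW_def)
    finally show "Y^(N-i) / fact i * (\<Sum>K=0..N-i. fps_nth (GG i) K * (1 / fact (2*(N-i-K)+1))) =
        Y^(N-i) / fact i * fps_nth (KK i) (N-i)" by simp
  qed
  also have "\<dots> = (\<Sum>i\<in>{1..N}. of_nat (N choose i) * Y^(N-i) / fact (2*N))"
  proof (intro sum.cong refl)
    fix i assume i: "i \<in> {1..N}"
    then have e: "2 * (N - i) + 2 * i = 2*N" "N - i + i = N" by auto
    have "fps_nth (KK i) (N-i) = fact N / (fact (N-i) * fact (2*N))" by (simp add: KK_def e)
    moreover have "real (N choose i) = fact N / (fact i * fact (N-i))"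
      using i by (simp add: binomial_fact)
    ultimately show "Y^(N-i) / fact i * fps_nth (KK i) (N-i) = of_nat (N choose i) * Y^(N-i) / fact (2*N)"
      by (simp add: mult.commute mult.left_commute mult.assoc)
  qed
  also have "\<dots> = ((Y+1)^N - Y^N) / fact (2*N)"
  proof -
    have "(Y+1)^N = (\<Sum>i\<le>N. of_nat (N choose i) * 1^i * Y^(N-i))"
      by (subst add.commute) (rule binomial_ring)
    also have "\<dots> = Y^N + (\<Sum>i\<in>{1..N}. of_nat (N choose i) * Y^(N-i))"
      by (simp add: sum.atMost_shift atLeastAtMostSuc_conv sum.shift_bounds_cl_Suc_ivl atLeast0AtMost[symmetric] sum.atLeast_Suc_atMost)
    finally show ?thesis by (simp add: sum_divide_distrib)
  qed
  finally show ?thesis by (simp add: Y_def)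
qed

lemma cosh_real_exp: "cosh (x::real) = (exp x + exp (-x)) / 2"
  by (simp add: cosh_def)
lemma sinh_real_exp: "sinh (x::real) = (exp x - exp (-x)) / 2"
  by (simp add: sinh_def)

lemma gf_expansion:
  fixes y :: real
  assumes y: "y > 0"
  shows "faulhaber_gf y has_fps_expansion ev (Abs_fps (\<lambda>p. DD p y))"
proof -
  define a where "a = sqrt y / 2"
  define b where "b = sqrt (y+4) / 2"
  define Y where "Y = y / 4"
  have a0: "a > 0" using y by (simp add: a_def)
  have a2: "a^2 = Y" using y by (simp add: a_def Y_def power_divide)
  have b2: "b^2 = Y + 1" using y by (simp add: b_def Y_def power_divide)
  define Fn where "Fn x = (1/2) * (exp (b*x) + exp ((-b)*x)) - (1/2) * (exp (a*x) + exp ((-a)*x))" for x :: real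
  define NN where "NN = fps_const (1/2) * (fps_exp b + fps_exp (-b)) - fps_const (1/2) * (fps_exp a + fps_exp (-a))"
  define g0 where "g0 x = (1/(2*a)) * (exp (a*x) - exp ((-a)*x))" for x :: real
  define F0 where "F0 = fps_const (1/(2*a)) * (fps_exp a - fps_exp (-a))"
  define Gn where "Gn x = (if x = 0 then fps_nth F0 1 else g0 x / x ^ 1)" for x :: real
  have hF: "Fn has_fps_expansion NN"
    unfolding Fn_def NN_def by (intro fps_expansion_intros)
  have hg0: "g0 has_fps_expansion F0"
    unfolding g0_def F0_def by (intro fps_expansion_intros)
  have F0_0: "fps_nth F0 0 = 0" by (simp add: F0_def)
  have F0_1: "fps_nth F0 1 = 1" using a0 by (simp add: F0_def)
  have F0_1': "fps_nth F0 (Suc 0) = 1" using F0_1 by simp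
  have F0nz: "F0 \<noteq> 0" using F0_1 by auto
  have sd: "1 \<le> subdegree F0" using F0nz F0_0 by (intro subdegree_geI) auto
  have hG: "Gn has_fps_expansion fps_shift 1 F0"
    unfolding Gn_def by (rule has_fps_expansion_shift[OF hg0 sd refl])
  have hFG: "(\<lambda>x. Fn x / Gn x) has_fps_expansion NN / fps_shift 1 F0"
    by (rule has_fps_expansion_divide'[OF hF hG]) (simp add: F0_1')
  have SS: "fps_shift 1 F0 = ev (Abs_fps (\<lambda>p. Y^p / fact (2*p+1)))"
  proof (rule fps_ext)
    fix m
    show "fps_nth (fps_shift 1 F0) m = fps_nth (ev (Abs_fps (\<lambda>p. Y^p / fact (2*p+1)))) m"
    proof (cases "even m")
      case True
      then obtain p where m: "m = 2*p" by auto
      have "a^(2*p+1) = a * Y^p" by (simp add: power_mult a2 flip: a2)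
      then show ?thesis using m a0 by (simp add: F0_def field_simps del: fact_Suc)
    next
      case False
      then have "even (m+1)" by simp
      then show ?thesis using False by (simp add: F0_def ev_nth_odd)
    qed
  qed
  have NNe: "NN = ev (Abs_fps (\<lambda>p. ((Y+1)^p - Y^p) / fact (2*p)))"
  proof (rule fps_ext)
    fix m
    show "fps_nth NN m = fps_nth (ev (Abs_fps (\<lambda>p. ((Y+1)^p - Y^p) / fact (2*p)))) m"
    proof (cases "even m")
      case True
      then obtain p where m: "m = 2*p" by auto
      have "a^(2*p) = Y^p" "b^(2*p) = (Y+1)^p" by (simp_all add: power_mult a2 b2)
      then show ?thesis using m by (simp add: NN_def field_simps)
    next
      case False
      then show ?thesis by (simp add: NN_def ev_nth_odd)
    qed
  qed
  have prod: "ev (Abs_fps (\<lambda>p. DD p y)) * fps_shift 1 F0 = NN"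
  proof -
    have "Abs_fps (\<lambda>p. DD p y) * Abs_fps (\<lambda>p. Y^p / fact (2*p+1)) = Abs_fps (\<lambda>p. ((Y+1)^p - Y^p) / fact (2*p))"
    proof (rule fps_ext)
      fix N
      show "fps_nth (Abs_fps (\<lambda>p. DD p y) * Abs_fps (\<lambda>p. Y^p / fact (2*p+1))) N = fps_nth (Abs_fps (\<lambda>p. ((Y+1)^p - Y^p) / fact (2*p))) N"
        unfolding fps_mult_nth fps_nth_Abs_fps Y_def by (rule E1)
    qed
    then show ?thesis unfolding SS NNe by (simp flip: ev_mult)
  qed
  have SSnz: "fps_shift 1 F0 \<noteq> 0"
  proof
    assume "fps_shift 1 F0 = 0"
    then have "fps_nth (fps_shift 1 F0) 0 = 0" by simp
    then show False using F0_1 by simp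
  qed
  have Phi: "ev (Abs_fps (\<lambda>p. DD p y)) = NN / fps_shift 1 F0"
    using prod SSnz by (metis fps_divide_times_eq)
  have feq: "faulhaber_gf y = (\<lambda>x. Fn x / Gn x)"
  proof
    fix x :: real
    show "faulhaber_gf y x = Fn x / Gn x"
    proof (cases "x = 0")
      case True then show ?thesis by (simp add: faulhaber_gf_def Fn_def Gn_def F0_1)
    next
      case False
      have "Fn x = cosh (x * sqrt (y+4) / 2) - cosh (x * sqrt y / 2)"
        by (simp add: Fn_def cosh_real_exp a_def b_def field_simps)
      moreover have "Gn x = sinh (x * sqrt y / 2) / (x * sqrt y / 2)"
        using False a0 by (simp add: Gn_def g0_def sinh_real_exp a_def field_simps)
      ultimately show ?thesis
        by (simp add: faulhaber_gf_def divide_divide_eq_right mult.commute)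
    qed
  qed
  show ?thesis unfolding feq Phi by (rule hFG)
qed

lemma gf_sums:
  fixes y :: real
  assumes y: "y > 0"
  shows "\<exists>r>0. \<forall>x. \<bar>x\<bar> < r \<longrightarrow>
         (\<lambda>n. \<Sum>k<n. x ^ (2*n) / fact (2*n) * cc n k * y ^ k) sums faulhaber_gf y x"
proof -
  define Phi where "Phi = ev (Abs_fps (\<lambda>p. DD p y))"
  have h: "faulhaber_gf y has_fps_expansion Phi" using gf_expansion[OF y] by (simp add: Phi_def)
  then have R: "fps_conv_radius Phi > 0" and ev1: "eventually (\<lambda>z. eval_fps Phi z = faulhaber_gf y z) (nhds 0)"
    by (auto simp: has_fps_expansion_def)
  have ev2: "eventually (\<lambda>z. z \<in> eball 0 (fps_conv_radius Phi)) (nhds (0::real))"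
    using R by (intro eventually_nhds_in_open) (auto simp: zero_ereal_def)
  have "eventually (\<lambda>z. (\<lambda>m. fps_nth Phi m * z^m) sums faulhaber_gf y z) (nhds 0)"
    using ev1 ev2
  proof eventually_elim
    case (elim z)
    then have "norm z < fps_conv_radius Phi" by simp
    from sums_eval_fps[OF this] elim(1) show ?case by simp
  qed
  then obtain r where r: "r > 0" "\<And>x. dist x 0 < r \<Longrightarrow> (\<lambda>m. fps_nth Phi m * x^m) sums faulhaber_gf y x"
    unfolding eventually_nhds_metric by blast
  show ?thesis
  proof (intro exI[of _ r] conjI allI impI)
    fix x :: real assume x: "\<bar>x\<bar> < r"
    have s: "(\<lambda>m. fps_nth Phi m * x^m) sums faulhaber_gf y x" using r x by simp
    have sm: "strict_mono (\<lambda>n::nat. 2*n)" by (auto simp: strict_mono_def)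
    have z: "fps_nth Phi n * x^n = 0" if "n \<notin> range (\<lambda>n::nat. 2*n)" for n
    proof -
      have "odd n" using that by (metis evenE rangeI)
      then show ?thesis by (simp add: Phi_def ev_nth_odd)
    qed
    have "(\<lambda>n. fps_nth Phi (2*n) * x^(2*n)) sums faulhaber_gf y x"
      using sums_mono_reindex[OF sm, of "\<lambda>m. fps_nth Phi m * x^m", OF z] s by simp
    then have "(\<lambda>n. DD n y * x^(2*n)) sums faulhaber_gf y x" by (simp add: Phi_def)
    then show "(\<lambda>n. \<Sum>k<n. x ^ (2*n) / fact (2*n) * cc n k * y ^ k) sums faulhaber_gf y x"
      by (simp only: D_eq)
  qed (rule r)
qed

lemma powser_zero_unique:
  fixes d :: "nat \<Rightarrow> real"
  assumes r: "r > 0" and s: "\<And>x. \<bar>x\<bar> < r \<Longrightarrow> (\<lambda>n. d n * x^n) sums 0"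
  shows "d n = 0"
proof (induction n rule: less_induct)
  case (less n)
  have A: "(\<lambda>i. d (i+n) * x^i) sums 0" if x: "x \<noteq> 0" "norm x < r" for x :: real
  proof -
    have "(\<lambda>i. d i * x^i) sums 0" using s x by simp
    then have "(\<lambda>i. d (i+n) * x^(i+n)) sums 0"
      using sums_zero_iff_shift[of n "\<lambda>i. d i * x^i" 0] less by simp
    then have "(\<lambda>i. d (i+n) * x^(i+n) * (1 / x^n)) sums (0 * (1/x^n))"
      by (rule sums_mult2)
    moreover have "d (i+n) * x^(i+n) * (1 / x^n) = d (i+n) * x^i" for i
      using x by (simp add: power_add)
    ultimately show ?thesis by simp
  qed
  have "((\<lambda>x::real. 0::real) \<longlongrightarrow> d (0+n)) (at 0)"
    using powser_limit_0_strong[where a = "\<lambda>i. d (i+n)" and f = "\<lambda>x. 0", OF r A] by simp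
  then have "0 = d n" using LIM_const_eq by fastforce
  then show ?case by simp
qed

lemma cc_unique:
  fixes c :: "nat \<Rightarrow> nat \<Rightarrow> real"
  assumes h1: "\<forall>n k. n \<le> k \<longrightarrow> c n k = 0"
  and h2: "\<forall>y>0. \<exists>r>0. \<forall>x. \<bar>x\<bar> < r \<longrightarrow>
         (\<lambda>n. \<Sum>k<n. x ^ (2*n) / fact (2*n) * c n k * y ^ k) sums faulhaber_gf y x"
  shows "c = cc"
proof (intro ext)
  fix n0 k0
  show "c n0 k0 = cc n0 k0"
  proof (cases "n0 \<le> k0")
    case True then show ?thesis using h1 by (simp add: cc_def)
  next
    case False
    have P0: "(\<Sum>k<n0. (c n0 k - cc n0 k) * y^k) = 0" if y: "y > 0" for y :: real
    proof -
      obtain r1 where r1: "r1 > 0" "\<And>x. \<bar>x\<bar> < r1 \<Longrightarrow>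
         (\<lambda>n. \<Sum>k<n. x ^ (2*n) / fact (2*n) * c n k * y ^ k) sums faulhaber_gf y x"
        using h2 y by blast
      obtain r2 where r2: "r2 > 0" "\<And>x. \<bar>x\<bar> < r2 \<Longrightarrow>
         (\<lambda>n. \<Sum>k<n. x ^ (2*n) / fact (2*n) * cc n k * y ^ k) sums faulhaber_gf y x"
        using gf_sums[OF y] by blast
      define P where "P n = (\<Sum>k<n. (c n k - cc n k) * y^k) / fact (2*n)" for n
      define d where "d m = (if even m then P (m div 2) else 0)" for m
      have ds: "(\<lambda>m. d m * x^m) sums 0" if x: "\<bar>x\<bar> < min r1 r2" for x :: real
      proof -
        have "(\<lambda>n. (\<Sum>k<n. x ^ (2*n) / fact (2*n) * c n k * y ^ k) -
                  (\<Sum>k<n. x ^ (2*n) / fact (2*n) * cc n k * y ^ k)) sums (faulhaber_gf y x - faulhaber_gf y x)"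
          using x by (intro sums_diff r1(2) r2(2)) auto
        moreover have "(\<Sum>k<n. x ^ (2*n) / fact (2*n) * c n k * y ^ k) -
                  (\<Sum>k<n. x ^ (2*n) / fact (2*n) * cc n k * y ^ k) = d (2*n) * x^(2*n)" for n
        proof -
          have "(\<Sum>k<n. x ^ (2*n) / fact (2*n) * c n k * y ^ k) -
                  (\<Sum>k<n. x ^ (2*n) / fact (2*n) * cc n k * y ^ k) =
                (\<Sum>k<n. x ^ (2*n) / fact (2*n) * c n k * y ^ k - x ^ (2*n) / fact (2*n) * cc n k * y ^ k)"
            by (simp only: sum_subtractf)
          also have "\<dots> = (\<Sum>k<n. x^(2*n) * ((c n k - cc n k) * y^k / fact (2*n)))"
            by (intro sum.cong refl) (simp add: field_simps)
          also have "\<dots> = x^(2*n) * P n" by (simp add: P_def sum_distrib_left sum_divide_distrib)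
          finally show ?thesis by (simp add: d_def)
        qed
        ultimately have "(\<lambda>n. d (2*n) * x^(2*n)) sums 0" by simp
        moreover have sm: "strict_mono (\<lambda>n::nat. 2*n)" by (auto simp: strict_mono_def)
        moreover have "d m * x^m = 0" if "m \<notin> range (\<lambda>n::nat. 2*n)" for m
        proof -
          have "odd m" using that by (metis evenE rangeI)
          then show ?thesis by (simp add: d_def)
        qed
        ultimately show ?thesis using sums_mono_reindex[OF sm, of "\<lambda>m. d m * x^m"] by simp
      qed
      have "d (2*n0) = 0"
        by (rule powser_zero_unique[of "min r1 r2"]) (use r1 r2 ds in auto)
      then show ?thesis by (simp add: d_def P_def)
    qed
    define e where "e i = (if i < n0 then c n0 i - cc n0 i else 0)" for i
    have esum: "(\<Sum>i\<le>n0. e i * y^i) = (\<Sum>k<n0. (c n0 k - cc n0 k) * y^k)" for y :: real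
    proof -
      have "(\<Sum>i\<le>n0. e i * y^i) = (\<Sum>i<Suc n0. e i * y^i)" by (simp add: lessThan_Suc_atMost)
      also have "\<dots> = (\<Sum>i<n0. e i * y^i)" by (simp add: e_def)
      also have "\<dots> = (\<Sum>k<n0. (c n0 k - cc n0 k) * y^k)" by (intro sum.cong refl) (simp add: e_def)
      finally show ?thesis .
    qed
    show ?thesis
    proof (rule ccontr)
      assume ne: "c n0 k0 \<noteq> cc n0 k0"
      then have "e k0 \<noteq> 0" using False by (simp add: e_def)
      then have "\<exists>k\<le>n0. e k \<noteq> 0" using False by (intro exI[of _ k0]) auto
      then have fin: "finite {z::real. (\<Sum>i\<le>n0. e i * z^i) = 0}"
        using polyfun_rootbound[where c = e and n = n0] by blast
      have "{0::real<..} \<subseteq> {z::real. (\<Sum>i\<le>n0. e i * z^i) = 0}"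
        using P0 esum by auto
      then have "finite {0::real<..}" using fin finite_subset by blast
      then show False using infinite_Ioi by blast
    qed
  qed
qed

lemma faulhaber_A_eq: "faulhaber_A = cc"
  unfolding faulhaber_A_def
proof (rule the_equality)
  show "(\<forall>n k. n \<le> k \<longrightarrow> cc n k = 0) \<and>
    (\<forall>y>0. \<exists>r>0. \<forall>x. \<bar>x\<bar> < r \<longrightarrow>
       (\<lambda>n. \<Sum>k<n. x ^ (2*n) / fact (2*n) * cc n k * y ^ k) sums faulhaber_gf y x)"
    using gf_sums by (auto simp: cc_def)
next
  fix c :: "nat \<Rightarrow> nat \<Rightarrow> real"
  assume "(\<forall>n k. n \<le> k \<longrightarrow> c n k = 0) \<and>
    (\<forall>y>0. \<exists>r>0. \<forall>x. \<bar>x\<bar> < r \<longrightarrow>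
       (\<lambda>n. \<Sum>k<n. x ^ (2*n) / fact (2*n) * c n k * y ^ k) sums faulhaber_gf y x)"
  then show "c = cc" using cc_unique by blast
qed

lemma t1:
  fixes w :: complex assumes "w \<notin> \<int>"
  shows "Gamma w * Gamma (1 - w) * sin (of_real pi * w) = of_real pi"
proof -
  have "sin (of_real pi * w) \<noteq> 0" using assms by (subst sin_eq_0) auto
  then show ?thesis using Gamma_reflection_complex[of w] by simp
qed

lemma t2:
  fixes z :: complex
  assumes zn: "z \<notin> \<int>\<^sub>\<le>\<^sub>0" and z1n: "1 - z \<notin> \<int>\<^sub>\<le>\<^sub>0"
  shows "((\<lambda>w. Gamma w * Gamma (1 - w) * sin (of_real pi * w)) has_field_derivative
     (Gamma z * Digamma z * Gamma (1 - z) * sin (of_real pi * z) +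
     Gamma z * (- (Gamma (1 - z) * Digamma (1 - z))) * sin (of_real pi * z) +
     Gamma z * Gamma (1 - z) * (cos (of_real pi * z) * of_real pi))) (at z)"
proof -
  have g1: "(Gamma has_field_derivative Gamma z * Digamma z) (at z)"
    by (rule has_field_derivative_Gamma[OF zn])
  have m1: "((\<lambda>w. 1 - w) has_field_derivative (-1)) (at z)"
    by (auto intro!: derivative_eq_intros)
  have g2: "((\<lambda>w. Gamma (1 - w)) has_field_derivative (Gamma (1 - z) * Digamma (1 - z)) * (-1)) (at z)"
    by (rule DERIV_chain2[OF has_field_derivative_Gamma[OF z1n] m1])
  have m2: "((\<lambda>w. of_real pi * w) has_field_derivative of_real pi) (at z)"
    by (auto intro!: derivative_eq_intros)
  have g3: "((\<lambda>w. sin (of_real pi * w)) has_field_derivative cos (of_real pi * z) * of_real pi) (at z)"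
    by (rule DERIV_chain2[OF DERIV_sin m2])
  have "((\<lambda>w. Gamma w * Gamma (1 - w) * sin (of_real pi * w)) has_field_derivative
     (Gamma z * Digamma z * Gamma (1 - z) + Gamma (1 - z) * Digamma (1 - z) * (-1) * Gamma z) * sin (of_real pi * z)
      + cos (of_real pi * z) * of_real pi * (Gamma z * Gamma (1 - z))) (at z)"
    by (rule DERIV_mult[OF DERIV_mult[OF g1 g2] g3])
  then show ?thesis by (rule DERIV_cong) (simp add: algebra_simps)
qed


lemma cot_digamma:
  fixes z :: complex
  assumes z: "z \<notin> \<int>"
  shows "of_real pi * cos (of_real pi * z) = (Digamma (1 - z) - Digamma z) * sin (of_real pi * z)"
proof -
  have z1: "1 - z \<notin> \<int>"
  proof
    assume "1 - z \<in> \<int>"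
    then have "1 - (1 - z) \<in> \<int>" by (intro Ints_diff) auto
    then show False using z by simp
  qed
  have zn: "z \<notin> \<int>\<^sub>\<le>\<^sub>0" using z nonpos_Ints_subset_Ints by blast
  have z1n: "1 - z \<notin> \<int>\<^sub>\<le>\<^sub>0" using z1 nonpos_Ints_subset_Ints by blast
  define g where "g w = Gamma w * Gamma (1 - w) * sin (of_real pi * w)" for w :: complex
  define D where "D = Gamma z * Digamma z * Gamma (1 - z) * sin (of_real pi * z) +
     Gamma z * (- (Gamma (1 - z) * Digamma (1 - z))) * sin (of_real pi * z) +
     Gamma z * Gamma (1 - z) * (cos (of_real pi * z) * of_real pi)"
  have dg: "(g has_field_derivative D) (at z)"
    unfolding g_def D_def by (rule t2[OF zn z1n])
  have ev: "eventually (\<lambda>w. w \<in> UNIV - \<int>) (nhds z)"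
    using z by (intro eventually_nhds_in_open) (auto simp: open_Diff)
  have ev2: "eventually (\<lambda>w. g w = of_real pi) (nhds z)"
    using ev by eventually_elim (simp add: g_def t1)
  have "((\<lambda>w. of_real pi) has_field_derivative 0) (at z)" by (rule DERIV_const)
  then have "(g has_field_derivative 0) (at z)"
    using DERIV_cong_ev[OF refl ev2 refl] by simp
  with dg have D0: "D = 0" using DERIV_unique by blast
  have G: "Gamma z * Gamma (1 - z) \<noteq> 0" using zn z1n by (auto simp: Gamma_eq_zero_iff)
  have "D = (Gamma z * Gamma (1 - z)) * ((Digamma z - Digamma (1 - z)) * sin (of_real pi * z) + of_real pi * cos (of_real pi * z))"
    unfolding D_def by (simp add: algebra_simps)
  with D0 G have "(Digamma z - Digamma (1 - z)) * sin (of_real pi * z) + of_real pi * cos (of_real pi * z) = 0"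
    by simp
  then show ?thesis by (simp add: algebra_simps)
qed

definition hfun :: "complex \<Rightarrow> complex" where
  "hfun z = 1 - z * (Digamma (1*z + 1) - Digamma ((-1)*z + 1))"

lemma ball11_nonpos: "w \<in> ball (1::complex) 1 \<Longrightarrow> w \<notin> \<int>\<^sub>\<le>\<^sub>0"
proof
  assume w: "w \<in> ball 1 1" "w \<in> \<int>\<^sub>\<le>\<^sub>0"
  then obtain n where n: "w = of_int n" "n \<le> 0" by (auto elim!: nonpos_Ints_cases)
  then have "norm (1 - of_int n :: complex) < 1" using w(1) by (simp add: dist_norm)
  also have "norm (1 - of_int n :: complex) = \<bar>1 - real_of_int n\<bar>"
    by (metis norm_of_int of_int_1 of_int_diff)
  finally show False using n by simp
qed

lemma h_sin:
  assumes z: "norm z < 1"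
  shows "hfun z * sin (of_real pi * z) = of_real pi * (z * cos (of_real pi * z))"
proof (cases "z = 0")
  case True then show ?thesis by simp
next
  case False
  have zI: "z \<notin> \<int>"
  proof
    assume "z \<in> \<int>"
    then obtain n where n: "z = of_int n" by (auto elim!: Ints_cases)
    then have "\<bar>real_of_int n\<bar> < 1" using z by (metis norm_of_int)
    then have "n = 0" by linarith
    then show False using n False by simp
  qed
  have c: "of_real pi * cos (of_real pi * z) = (Digamma (1 - z) - Digamma z) * sin (of_real pi * z)"
    by (rule cot_digamma[OF zI])
  have d: "Digamma (1 + z) = Digamma z + 1 / z" using Digamma_plus1[OF False] by (simp add: add.commute)
  have "hfun z * sin (of_real pi * z) = sin (of_real pi * z) - z * (Digamma (z + 1) - Digamma (1 - z)) * sin (of_real pi * z)"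
    by (simp add: hfun_def algebra_simps)
  also have "\<dots> = z * ((Digamma (1 - z) - Digamma z) * sin (of_real pi * z))"
    using False by (simp add: d algebra_simps)
  also have "\<dots> = of_real pi * (z * cos (of_real pi * z))" by (simp add: c[symmetric])
  finally show ?thesis .
qed

lemma polygamma_expansion:
  fixes u :: complex
  assumes u: "norm u = 1"
  shows "(\<lambda>w. Digamma (u*w + 1)) has_fps_expansion Abs_fps (\<lambda>n. u^n * Polygamma n 1 / fact n)"
proof -
  have img: "(\<lambda>w. u*w + 1) ` ball 0 1 \<subseteq> ball 1 1"
    using u by (auto simp: dist_norm norm_mult)
  have hp: "Polygamma 0 holomorphic_on ball (1::complex) 1"
    using ball11_nonpos by (intro holomorphic_on_Polygamma) blast
  have holo: "(\<lambda>w. Digamma (u*w + 1)) holomorphic_on ball 0 1"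
  proof -
    have "(Polygamma 0 \<circ> (\<lambda>w. u*w + 1)) holomorphic_on ball 0 1"
      by (rule holomorphic_on_compose_gen[OF _ hp img]) (intro holomorphic_intros)
    then show ?thesis by (simp add: o_def)
  qed
  have e: "(\<lambda>w. Digamma (u*w + 1)) has_fps_expansion fps_expansion (\<lambda>w. Digamma (u*w + 1)) 0"
    by (rule has_fps_expansion_fps_expansion[OF open_ball _ holo]) simp
  have "(deriv ^^ n) (\<lambda>w. Digamma (u*w + 1)) 0 = u^n * Polygamma n 1" for n
  proof -
    have "(deriv ^^ n) (\<lambda>w. Polygamma 0 (u*w + 1)) 0 = u^n * (deriv ^^ n) (Polygamma 0) (u*0 + 1)"
      by (rule higher_deriv_compose_linear'[where S = "ball 0 1", OF hp open_ball open_ball]) (use u in \<open>auto simp: dist_norm norm_mult\<close>)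
    also have "(deriv ^^ n) (Polygamma 0) (u*0 + 1) = Polygamma n (1::complex)"
      using higher_deriv_Polygamma[of "1::complex" n 0] by simp
    finally show ?thesis by simp
  qed
  then have "fps_expansion (\<lambda>w. Digamma (u*w + 1)) 0 = Abs_fps (\<lambda>n. u^n * Polygamma n 1 / fact n)"
    by (simp add: fps_expansion_def)
  with e show ?thesis by simp
qed

definition HH :: "complex fps" where
  "HH = 1 - fps_X * (Abs_fps (\<lambda>n. 1^n * Polygamma n 1 / fact n) - Abs_fps (\<lambda>n. (-1)^n * Polygamma n 1 / fact n))"

lemma HH_expansion: "hfun has_fps_expansion HH"
proof -
  have p1: "(\<lambda>w::complex. Digamma (1*w + 1)) has_fps_expansion Abs_fps (\<lambda>n. 1^n * Polygamma n 1 / fact n)"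
    using polygamma_expansion[of 1] by simp
  have p2: "(\<lambda>w::complex. Digamma ((-1)*w + 1)) has_fps_expansion Abs_fps (\<lambda>n. (-1)^n * Polygamma n 1 / fact n)"
    using polygamma_expansion[of "-1"] by simp
  have "(\<lambda>z. 1 - z * (Digamma (1*z + 1) - Digamma ((-1)*z + 1))) has_fps_expansion HH"
    unfolding HH_def by (intro fps_expansion_intros p1 p2)
  then show ?thesis by (simp add: hfun_def[abs_def])
qed

lemma HH_sin_cos: "HH * fps_sin (of_real pi) = fps_const (of_real pi) * (fps_X * fps_cos (of_real pi))"
proof -
  have a: "(\<lambda>z. hfun z * sin (of_real pi * z)) has_fps_expansion HH * fps_sin (of_real pi)"
    by (intro fps_expansion_intros HH_expansion)
  have b: "(\<lambda>z::complex. of_real pi * (z * cos (of_real pi * z))) has_fps_expansion fps_const (of_real pi) * (fps_X * fps_cos (of_real pi))"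
    by (intro fps_expansion_intros has_fps_expansion_cos)
  have ev: "eventually (\<lambda>z::complex. z \<in> ball 0 1) (nhds 0)"
    by (intro eventually_nhds_in_open) auto
  have evq: "eventually (\<lambda>z. hfun z * sin (of_real pi * z) = of_real pi * (z * cos (of_real pi * z))) (nhds 0)"
    using ev by eventually_elim (simp add: h_sin)
  then have "(\<lambda>z. of_real pi * (z * cos (of_real pi * z))) has_fps_expansion HH * fps_sin (of_real pi)"
    using has_fps_expansion_cong[OF evq refl] a by blast
  with b show ?thesis using fps_expansion_unique_complex by blast
qed

abbreviation cpi :: complex where "cpi \<equiv> complex_of_real pi"

lemma HH_nth_Suc: "fps_nth HH (Suc m) = - ((1 - (-1)^m) * Polygamma m 1 / fact m)"
  by (simp add: HH_def algebra_simps diff_divide_distrib)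

lemma HH_odd: "fps_nth HH (Suc (2*q)) = 0"
  using HH_nth_Suc[of "2*q"] by simp

lemma HH_even: "fps_nth HH (Suc (Suc (2*q))) = - 2 * Polygamma (Suc (2*q)) 1 / fact (Suc (2*q))"
  using HH_nth_Suc[of "Suc (2*q)"] by (simp del: fact_Suc)

definition Hw :: "complex fps" where "Hw = Abs_fps (\<lambda>r. fps_nth HH (2*r))"
definition Sw :: "complex fps" where "Sw = Abs_fps (\<lambda>b. (-1)^b * cpi^(2*b+1) * (1 / fact (2*b+1)))"
definition Cw :: "complex fps" where "Cw = Abs_fps (\<lambda>b. cpi * ((-1)^b * cpi^(2*b) / fact (2*b)))"

lemma HH_ev: "HH = ev Hw"
proof (rule fps_ext)
  fix m
  show "fps_nth HH m = fps_nth (ev Hw) m"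
  proof (cases "even m")
    case True then show ?thesis by (auto simp: Hw_def elim!: evenE)
  next
    case False
    then obtain q where "m = Suc (2*q)" by (auto elim!: oddE)
    then show ?thesis using False by (simp add: HH_odd ev_nth_odd)
  qed
qed

lemma sin_ev: "fps_sin cpi = fps_X * ev Sw"
proof (rule fps_ext)
  fix m
  show "fps_nth (fps_sin cpi) m = fps_nth (fps_X * ev Sw) m"
  proof (cases "even m")
    case True
    then show ?thesis by (cases m) (auto simp: fps_sin_def ev_nth_odd)
  next
    case False
    then obtain q where m: "m = Suc (2*q)" by (auto elim!: oddE)
    then show ?thesis by (simp add: fps_sin_def Sw_def del: fact_Suc)
  qed
qed

lemma cos_ev: "fps_const cpi * (fps_X * fps_cos cpi) = fps_X * ev Cw"
proof (rule fps_ext)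
  fix m
  show "fps_nth (fps_const cpi * (fps_X * fps_cos cpi)) m = fps_nth (fps_X * ev Cw) m"
  proof (cases m)
    case 0 then show ?thesis by simp
  next
    case (Suc k)
    show ?thesis
    proof (cases "even k")
      case True
      then obtain q where "k = 2*q" by auto
      then show ?thesis using Suc by (simp add: fps_cos_def Cw_def)
    next
      case False
      then show ?thesis using Suc by (simp add: fps_cos_def ev_nth_odd)
    qed
  qed
qed

lemma HwSw: "Hw * Sw = Cw"
proof -
  have "fps_X * ev (Hw * Sw) = fps_X * ev Cw"
    using HH_sin_cos unfolding HH_ev sin_ev cos_ev ev_mult by (simp add: algebra_simps)
  then have e: "ev (Hw * Sw) = ev Cw" by simp
  show ?thesis
  proof (rule fps_ext)
    fix n
    have "fps_nth (ev (Hw * Sw)) (2*n) = fps_nth (ev Cw) (2*n)" using e by simp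
    then show "fps_nth (Hw * Sw) n = fps_nth Cw n" by simp
  qed
qed

definition tauc :: "nat \<Rightarrow> complex" where "tauc r = (-1)^r * fps_nth Hw r / cpi^(2*r)"
definition ShC :: "complex fps" where "ShC = Abs_fps (\<lambda>p. 1 / fact (2*p+1))"
definition ChC :: "complex fps" where "ChC = Abs_fps (\<lambda>p. 1 / fact (2*p))"

lemma tauc_rec: "Abs_fps tauc * ShC = ChC"
proof (rule fps_ext)
  fix M
  have cpi0: "cpi \<noteq> 0" by simp
  have trm: "tauc r * F =
      ((-1)^M / cpi^(2*M+1)) * (fps_nth Hw r * ((-1)^(M-r) * cpi^(2*(M-r)+1) * F))"
    if "r \<le> M" for r F
  proof -
    obtain d where M: "M = r + d" using \<open>r \<le> M\<close> le_Suc_ex by blast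
    have dd: "(-1::complex)^d * (-1)^d = 1" by (simp flip: power_mult_distrib)
    have p1: "((-1::complex)^(r+d)) * (-1)^d = (-1)^r"
      by (simp only: power_add mult.assoc dd mult_1_right)
    have p2: "cpi^(2*(r+d)+1) = cpi^(2*r) * cpi^(2*d+1)" by (simp add: power_add flip: power_add)
    have "((-1)^M / cpi^(2*M+1)) * (fps_nth Hw r * ((-1)^(M-r) * cpi^(2*(M-r)+1) * F))
        = ((-1)^(r+d) * (-1)^d) * fps_nth Hw r * F * (cpi^(2*d+1) / cpi^(2*(r+d)+1))"
      unfolding M by (simp add: field_simps)
    also have "\<dots> = (-1)^r * fps_nth Hw r * F / cpi^(2*r)"
      unfolding p1 p2 using cpi0 by simp
    finally show ?thesis by (simp add: tauc_def)
  qed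
  have "fps_nth (Abs_fps tauc * ShC) M = (\<Sum>r=0..M. tauc r * (1 / fact (2*(M-r)+1)))"
    by (simp add: fps_mult_nth ShC_def del: fact_Suc)
  also have "\<dots> = ((-1)^M / cpi^(2*M+1)) * (\<Sum>r=0..M. fps_nth Hw r * ((-1)^(M-r) * cpi^(2*(M-r)+1) * (1 / fact (2*(M-r)+1))))"
    unfolding sum_distrib_left by (intro sum.cong refl trm) simp
  also have "(\<Sum>r=0..M. fps_nth Hw r * ((-1)^(M-r) * cpi^(2*(M-r)+1) * (1 / fact (2*(M-r)+1)))) = fps_nth Cw M"
    unfolding HwSw[symmetric] by (simp add: fps_mult_nth Sw_def del: fact_Suc)
  also have "((-1)^M / cpi^(2*M+1)) * fps_nth Cw M = fps_nth ChC M"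
    using cpi0 by (simp add: Cw_def ChC_def field_simps flip: power_add)
  finally show "fps_nth (Abs_fps tauc * ShC) M = fps_nth ChC M" .
qed

lemma TTc_rec: "Abs_fps (\<lambda>r. complex_of_real (fps_nth TT r)) * ShC = ChC"
proof (rule fps_ext)
  fix M
  have "fps_nth (Abs_fps (\<lambda>r. complex_of_real (fps_nth TT r)) * ShC) M
      = complex_of_real (fps_nth (TT * ShW) M)"
    by (simp add: fps_mult_nth ShC_def ShW_def)
  also have "\<dots> = fps_nth ChC M" by (simp add: TT_mult ChW_def ChC_def)
  finally show "fps_nth (Abs_fps (\<lambda>r. complex_of_real (fps_nth TT r)) * ShC) M = fps_nth ChC M" .
qed

lemma tauc_TT: "tauc r = complex_of_real (fps_nth TT r)"
proof -
  have nz: "ShC \<noteq> 0"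
  proof
    assume "ShC = 0"
    then have "fps_nth ShC 0 = 0" by simp
    then show False by (simp add: ShC_def)
  qed
  have "Abs_fps tauc * ShC = Abs_fps (\<lambda>r. complex_of_real (fps_nth TT r)) * ShC"
    by (simp add: tauc_rec TTc_rec)
  then have "Abs_fps tauc = Abs_fps (\<lambda>r. complex_of_real (fps_nth TT r))"
    using nz by simp
  then show ?thesis by (metis fps_nth_Abs_fps)
qed

lemma polygamma_zeta: "Polygamma (Suc (2*q)) (1::real) / fact (Suc (2*q)) = zeta_real (real (2*q+2))"
proof -
  have "(\<lambda>k. inverse ((1 + real k)^Suc (Suc (2*q)))) sums ((-1) ^ Suc (Suc (2*q)) * Polygamma (Suc (2*q)) (1::real) / fact (Suc (2*q)))"
    by (rule Polygamma_LIMSEQ) auto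
  then have a: "(\<lambda>k. 1 / real (Suc k) ^ (2*q+2)) sums (Polygamma (Suc (2*q)) (1::real) / fact (Suc (2*q)))"
    by (simp add: inverse_eq_divide add.commute del: fact_Suc)
  have "(\<lambda>m. 1 / real (Suc m) powr real (2*q+2)) = (\<lambda>k. 1 / real (Suc k) ^ (2*q+2))"
    by (intro ext) (subst powr_realpow, auto)
  then show ?thesis using a unfolding zeta_real_def by (simp add: sums_iff del: fact_Suc)
qed

lemma TT_zeta: "fps_nth TT (Suc q) = 2 * (-1)^q * zeta_real (real (2*q+2)) / pi^(2*q+2)"
proof -
  have "complex_of_real (fps_nth TT (Suc q)) = tauc (Suc q)" by (simp add: tauc_TT)
  also have "\<dots> = (-1)^(Suc q) * fps_nth HH (Suc (Suc (2*q))) / cpi^(2*q+2)"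
    by (simp add: tauc_def Hw_def)
  also have "fps_nth HH (Suc (Suc (2*q))) = - 2 * complex_of_real (zeta_real (real (2*q+2)))"
  proof -
    have a: "Polygamma (Suc (2*q)) (1::complex) = complex_of_real (Polygamma (Suc (2*q)) 1)"
      using Polygamma_of_real[of 1 "Suc (2*q)"] by simp
    have b: "complex_of_real (Polygamma (Suc (2*q)) 1) / fact (Suc (2*q)) = complex_of_real (zeta_real (real (2*q+2)))"
      using polygamma_zeta[of q] by (metis of_real_divide of_real_fact)
    have "fps_nth HH (Suc (Suc (2*q))) = - 2 * (complex_of_real (Polygamma (Suc (2*q)) 1) / fact (Suc (2*q)))"
      unfolding HH_even a by simp
    then show ?thesis unfolding b .
  qed
  finally have "complex_of_real (fps_nth TT (Suc q)) = complex_of_real (2 * (-1)^q * zeta_real (real (2*q+2)) / pi^(2*q+2))"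
    by simp
  then show ?thesis by (simp only: of_real_eq_iff)
qed

lemma Gamma_nat: "Gamma (real (Suc m)) = fact m"
  using Gamma_fact[of m] by (simp add: add.commute)

lemma term_eq:
  fixes j a b :: nat
  shows "fact (2*(2*j+1+a+b)+2) / (fact ((2*j+1+a)+1) * 4^b) * (acoef j a * fps_nth TT (Suc (j+a+b))) =
    2 * (-1)^b * fact (2*(2*j+1+a+b)+2) / fact ((2*j+1+a)+1) *
    ((-1)^j * fact (2*j+2*a+1) / (fact a * fact (2*j+1)) * zeta_real (real (2*(j+a+b)+2)) / (2*pi)^(2*(j+a+b)+2))"
proof -
  define Z where "Z = zeta_real (real (2*(j+a+b)+2))"
  have s: "(-1::real)^(j+a+b) * (-1)^a = (-1)^j * (-1)^b"
  proof -
    have "(-1::real)^a * (-1)^a = 1" by (simp flip: power_mult_distrib)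
    then show ?thesis by (simp add: power_add algebra_simps)
  qed
  have p: "(2*pi)^(2*(j+a+b)+2) = 4^b * 4^(j+a+1) * pi^(2*(j+a+b)+2)"
  proof -
    define m where "m = j+a+b"
    have e: "2*(j+a+b)+2 = 2*(m+1)" by (simp add: m_def)
    have "(2*pi)^(2*(m+1)) = ((2*pi)^2)^(m+1)" by (simp only: power_mult)
    also have "\<dots> = (4 * pi^2)^(m+1)" by (simp add: power_mult_distrib)
    also have "\<dots> = 4^(m+1) * (pi^2)^(m+1)" by (simp only: power_mult_distrib)
    also have "(pi^2)^(m+1) = pi^(2*(m+1))" by (simp only: power_mult)
    also have "(4::real)^(m+1) = 4^b * 4^(j+a+1)" by (simp add: m_def power_add[symmetric] algebra_simps)
    finally show ?thesis unfolding e .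
  qed
  have pi0: "pi^(2*(j+a+b)+2) \<noteq> 0" by simp
  show ?thesis
    unfolding TT_zeta acoef_def Z_def[symmetric] p
    using pi0 s by (simp add: field_simps del: fact_Suc)
qed


theorem mainTheorem2:
  fixes n k :: nat
  assumes "1 \<le> k" and "k \<le> n"
  shows "faulhaber_A (n + 1) (n - k) =
    2 * (-1) ^ (n - k) * Gamma (real (2*n + 3)) / Gamma (real (k + 2)) *
    (\<Sum>j = 0..(k - 1) div 2.
       (-1) ^ j * Gamma (real (2*k - 2*j)) / (Gamma (real (k - 2*j)) * Gamma (real (2*j + 2))) *
       zeta_real (real (2*n - 2*j)) / (2 * pi) ^ (2*n - 2*j))"
proof -
  have e1: "n + 1 - (n - k) = k + 1" using assms by simp
  have "faulhaber_A (n + 1) (n - k) = fact (2*n+2) / (fact (k+1) * 4^(n-k)) * fps_nth (GG (k+1)) (n-k)"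
    unfolding faulhaber_A_eq cc_def using assms e1 by (simp del: fact_Suc)
  also have "\<dots> = fact (2*n+2) / (fact (k+1) * 4^(n-k)) *
      (\<Sum>j=0..(k-1) div 2. acoef j (k-2*j-1) * fps_nth TT (n-j))"
    using GG_coeff[OF assms] by simp
  also have "\<dots> = (\<Sum>j=0..(k-1) div 2. fact (2*n+2) / (fact (k+1) * 4^(n-k)) * (acoef j (k-2*j-1) * fps_nth TT (n-j)))"
    by (simp add: sum_distrib_left)
  also have "\<dots> = (\<Sum>j = 0..(k - 1) div 2. 2 * (-1) ^ (n - k) * Gamma (real (2*n + 3)) / Gamma (real (k + 2)) *
       ((-1) ^ j * Gamma (real (2*k - 2*j)) / (Gamma (real (k - 2*j)) * Gamma (real (2*j + 2))) *
       zeta_real (real (2*n - 2*j)) / (2 * pi) ^ (2*n - 2*j)))"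
  proof (intro sum.cong refl)
    fix j assume j: "j \<in> {0..(k-1) div 2}"
    then have "2*j+1 \<le> k" using assms by auto
    then obtain a where a: "k = 2*j+1+a" using le_Suc_ex by blast
    obtain b where b: "n = k + b" using assms le_Suc_ex by blast
    have r1: "n - k = b" "k - 2*j - 1 = a" "n - j = Suc (j+a+b)" "2*n - 2*j = 2*(j+a+b)+2"
      using a b by auto
    have q2: "2*n + 3 = Suc (2*n+2)" "k + 2 = Suc (k+1)" "2*k - 2*j = Suc (2*j+2*a+1)"
      "k - 2*j = Suc a" "2*j + 2 = Suc (2*j+1)" using a by auto
    have r2: "Gamma (real (2*n + 3)) = fact (2*n+2)" unfolding q2 by (rule Gamma_nat)
    have r3: "Gamma (real (k + 2)) = fact (k+1)" unfolding q2 by (rule Gamma_nat)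
    have r4: "Gamma (real (2*k - 2*j)) = fact (2*j+2*a+1)" unfolding q2 by (rule Gamma_nat)
    have r5: "Gamma (real (k - 2*j)) = fact a" unfolding q2 by (rule Gamma_nat)
    have r6: "Gamma (real (2*j + 2)) = fact (2*j+1)" unfolding q2 by (rule Gamma_nat)
    have "fact (2*n+2) / (fact (k+1) * 4^(n-k)) * (acoef j (k-2*j-1) * fps_nth TT (n-j)) =
      fact (2*(2*j+1+a+b)+2) / (fact ((2*j+1+a)+1) * 4^b) * (acoef j a * fps_nth TT (Suc (j+a+b)))"
      unfolding r1 using a b by simp
    also have "\<dots> = 2 * (-1)^b * fact (2*(2*j+1+a+b)+2) / fact ((2*j+1+a)+1) *
      ((-1)^j * fact (2*j+2*a+1) / (fact a * fact (2*j+1)) * zeta_real (real (2*(j+a+b)+2)) / (2*pi)^(2*(j+a+b)+2))"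
      by (rule term_eq)
    also have "\<dots> = 2 * (-1) ^ (n - k) * Gamma (real (2*n + 3)) / Gamma (real (k + 2)) *
       ((-1) ^ j * Gamma (real (2*k - 2*j)) / (Gamma (real (k - 2*j)) * Gamma (real (2*j + 2))) *
       zeta_real (real (2*n - 2*j)) / (2 * pi) ^ (2*n - 2*j))"
      unfolding r1 r2 r3 r4 r5 r6 using a b by simp
    finally show "fact (2*n+2) / (fact (k+1) * 4^(n-k)) * (acoef j (k-2*j-1) * fps_nth TT (n-j)) =
      2 * (-1) ^ (n - k) * Gamma (real (2*n + 3)) / Gamma (real (k + 2)) *
       ((-1) ^ j * Gamma (real (2*k - 2*j)) / (Gamma (real (k - 2*j)) * Gamma (real (2*j + 2))) *
       zeta_real (real (2*n - 2*j)) / (2 * pi) ^ (2*n - 2*j))" .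
  qed
  also have "\<dots> = 2 * (-1) ^ (n - k) * Gamma (real (2*n + 3)) / Gamma (real (k + 2)) *
    (\<Sum>j = 0..(k - 1) div 2.
       (-1) ^ j * Gamma (real (2*k - 2*j)) / (Gamma (real (k - 2*j)) * Gamma (real (2*j + 2))) *
       zeta_real (real (2*n - 2*j)) / (2 * pi) ^ (2*n - 2*j))"
    by (simp only: sum_distrib_left)
  finally show ?thesis .
qed


end
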